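(* Let $n\le 3$ and $R=\mathbb{C}[z_1,\dots,z_n]$. Let $f_1,\dots,f_P,g\in R$ be homogeneous polynomials of degree $m$ with $\{f_1,\dots,f_P,g\}$ linearly independent over $\mathbb{C}$, and let $I^+=\langle f_1,\dots,f_P\rangle$. If $\langle g\rangle_{m+1}\subseteq I^+_{m+1}$, then $P\ge n$.
   Context: For a homogeneous ideal $I\subseteq R$, $I_{d}$ denotes its homogeneous component of degree $d$. *)

theory Defs
  imports Complex_Main "HOL-Library.Poly_Mapping" "HOL-Library.Cardinality"
begin

text \<open>Polynomials in the variables indexed by the finite type 'n with complex
coefficients: finitely supported maps from monomials (exponent vectors,
maps from n to nat) to coefficients. Multiplication is the convolution product.\<close>

type_synonym 'n cpoly = "('n \<Rightarrow>\<^sub>0 nat) \<Rightarrow>\<^sub>0 complex"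

definition mon_deg :: "('n \<Rightarrow>\<^sub>0 nat) \<Rightarrow> nat" where
  "mon_deg a = (\<Sum>i\<in>Poly_Mapping.keys a. Poly_Mapping.lookup a i)"

text \<open>Homogeneous of degree d (the zero polynomial is homogeneous of every degree).\<close>
definition homogeneous :: "nat \<Rightarrow> 'n cpoly \<Rightarrow> bool" where
  "homogeneous d p \<longleftrightarrow> (\<forall>a\<in>Poly_Mapping.keys p. mon_deg a = d)"

definition cscale :: "complex \<Rightarrow> 'n cpoly \<Rightarrow> 'n cpoly" where
  "cscale c p = Poly_Mapping.map (\<lambda>x. c * x) p"

definition gen_ideal :: "nat \<Rightarrow> (nat \<Rightarrow> 'n cpoly) \<Rightarrow> 'n cpoly set" where
  "gen_ideal P f = {\<Sum>i<P. h i * f i | h. True}"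

definition hom_comp :: "'n cpoly set \<Rightarrow> nat \<Rightarrow> 'n cpoly set" where
  "hom_comp I d = {p \<in> I. homogeneous d p}"

definition lin_indep_fam :: "nat \<Rightarrow> (nat \<Rightarrow> 'n cpoly) \<Rightarrow> 'n cpoly \<Rightarrow> bool" where
  "lin_indep_fam P f g \<longleftrightarrow>
     (\<forall>c d. (\<Sum>i<P. cscale (c i) (f i)) + cscale d g = 0 \<longrightarrow> (\<forall>i<P. c i = 0) \<and> d = 0)"

end

theory Submission
  imports Defs "HOL-Computational_Algebra.Polynomial_Factorial" "HOL-Computational_Algebra.Field_as_Ring"
begin


abbreviation lookup where "lookup \<equiv> Poly_Mapping.lookup"
abbreviation keys where "keys \<equiv> Poly_Mapping.keys"

abbreviation cst :: "complex \<Rightarrow> 'n cpoly" where "cst c \<equiv> Poly_Mapping.single 0 c"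

lemma mon_deg_sum: "mon_deg (a::'n::finite \<Rightarrow>\<^sub>0 nat) = (\<Sum>i\<in>UNIV. lookup a i)"
  unfolding mon_deg_def by (rule sum.mono_neutral_left) (auto simp: in_keys_iff)

lemma mon_deg_add: "mon_deg (a + b :: 'n::finite \<Rightarrow>\<^sub>0 nat) = mon_deg a + mon_deg b"
  by (simp add: mon_deg_sum lookup_add sum.distrib)

lemma mon_deg_zero[simp]: "mon_deg 0 = 0"
  by (simp add: mon_deg_def)

lemma mon_deg_single[simp]: "mon_deg (Poly_Mapping.single v k) = k"
  by (simp add: mon_deg_def)

lemma mon_deg_eq_0: "mon_deg (a::'n::finite \<Rightarrow>\<^sub>0 nat) = 0 \<longleftrightarrow> a = 0"
proof
  assume "mon_deg a = 0"
  then have "\<forall>i. lookup a i = 0" by (simp add: mon_deg_sum)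
  then show "a = 0" by (simp add: poly_mapping_eqI)
qed simp

definition hc :: "nat \<Rightarrow> ('n::finite) cpoly \<Rightarrow> 'n cpoly" where
  "hc d p = Abs_poly_mapping (\<lambda>a. if mon_deg a = d then lookup p a else 0)"

lemma lookup_hc: "lookup (hc d p) a = (if mon_deg a = d then lookup p a else 0)"
proof -
  have "finite {a. (if mon_deg a = d then lookup p a else 0) \<noteq> 0}"
    by (rule finite_subset[of _ "keys p"]) (auto simp: in_keys_iff)
  then show ?thesis unfolding hc_def by simp
qed

lemma hc_add: "hc d (p + q) = hc d p + hc d q"
  by (rule poly_mapping_eqI) (simp add: lookup_hc lookup_add)
lemma hc_minus: "hc d (p - q) = hc d p - hc d q"
  by (rule poly_mapping_eqI) (simp add: lookup_hc lookup_minus)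
lemma hc_uminus: "hc d (- p) = - hc d p"
  by (rule poly_mapping_eqI) (simp add: lookup_hc)
lemma hc_zero[simp]: "hc d 0 = 0"
  by (rule poly_mapping_eqI) (simp add: lookup_hc)
lemma hc_sum: "hc d (sum F S) = (\<Sum>i\<in>S. hc d (F i))"
  by (induction S rule: infinite_finite_induct) (auto simp: hc_add)

lemma homogeneous_iff_hc: "homogeneous d p \<longleftrightarrow> hc d p = p"
  unfolding homogeneous_def
  by (auto simp: poly_mapping_eq_iff fun_eq_iff lookup_hc in_keys_iff split: if_splits)

lemma hc_other: "homogeneous d p \<Longrightarrow> e \<noteq> d \<Longrightarrow> hc e p = 0"
  unfolding homogeneous_def
  by (rule poly_mapping_eqI) (auto simp: lookup_hc in_keys_iff)

lemma homogeneous_hc: "homogeneous d (hc d p)"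
  unfolding homogeneous_def by (auto simp: in_keys_iff lookup_hc split: if_splits)

lemma homogeneous_zero[simp]: "homogeneous d 0"
  by (simp add: homogeneous_def)

lemma homogeneous_add: "homogeneous d (p::'n::finite cpoly) \<Longrightarrow> homogeneous d q \<Longrightarrow> homogeneous d (p + q)"
  by (simp add: homogeneous_iff_hc hc_add)
lemma homogeneous_diff: "homogeneous d (p::'n::finite cpoly) \<Longrightarrow> homogeneous d q \<Longrightarrow> homogeneous d (p - q)"
  by (simp add: homogeneous_iff_hc hc_minus)
lemma homogeneous_uminus: "homogeneous d (p::'n::finite cpoly) \<Longrightarrow> homogeneous d (- p)"
  by (simp add: homogeneous_iff_hc hc_uminus)

lemma homogeneous_mult:
  assumes "homogeneous i (p::'n::finite cpoly)" "homogeneous j q"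
  shows "homogeneous (i + j) (p * q)"
  unfolding homogeneous_def
proof
  fix c assume "c \<in> keys (p * q)"
  then obtain a b where "c = a + b" "a \<in> keys p" "b \<in> keys q"
    using keys_mult by blast
  then show "mon_deg c = i + j" using assms by (simp add: homogeneous_def mon_deg_add)
qed

lemma homogeneous_cst: "homogeneous 0 (cst c)"
  by (simp add: homogeneous_def)

lemma hc_decomp:
  assumes "finite D" "mon_deg ` keys p \<subseteq> D"
  shows "p = (\<Sum>i\<in>D. hc i p)"
proof (rule poly_mapping_eqI)
  fix a
  have "lookup (\<Sum>i\<in>D. hc i p) a = (\<Sum>i\<in>D. if mon_deg a = i then lookup p a else 0)"
    by (simp add: lookup_sum lookup_hc)
  also have "\<dots> = (if mon_deg a \<in> D then lookup p a else 0)"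
    using assms(1) by (simp add: sum.delta)
  also have "\<dots> = lookup p a" using assms(2) by (metis image_eqI in_keys_iff subsetD)
  finally show "lookup p a = lookup (\<Sum>i\<in>D. hc i p) a" by simp
qed

lemma hc_hc: "hc e (hc i p) = (if e = i then hc i p else 0)"
  by (rule poly_mapping_eqI) (simp add: lookup_hc)

lemma hc_nz_deg: "hc i p \<noteq> 0 \<Longrightarrow> i \<in> mon_deg ` keys p"
proof -
  assume "hc i p \<noteq> 0"
  then obtain a where "lookup (hc i p) a \<noteq> 0" by (metis poly_mapping_eqI lookup_zero)
  then show ?thesis by (auto simp: lookup_hc in_keys_iff split: if_splits)
qed

lemma hc_mult_homog:
  assumes q: "homogeneous j q"
  shows "hc e (p * q) = (if j \<le> e then hc (e - j) p * q else 0)"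
proof -
  define D where "D = mon_deg ` keys p"
  have fD: "finite D" by (simp add: D_def)
  have e: "p = (\<Sum>i\<in>D. hc i p)" by (rule hc_decomp[OF fD]) (simp add: D_def)
  have "p * q = (\<Sum>i\<in>D. hc i p) * q" by (rule arg_cong[where f="\<lambda>x. x * q", OF e])
  also have "\<dots> = (\<Sum>i\<in>D. hc i p * q)" by (simp add: sum_distrib_right)
  finally have "hc e (p * q) = (\<Sum>i\<in>D. hc e (hc i p * q))" by (simp add: hc_sum)
  also have "\<dots> = (\<Sum>i\<in>D. if i = e - j \<and> j \<le> e then hc i p * q else 0)"
  proof (rule sum.cong[OF refl])
    fix i
    have h: "homogeneous (i + j) (hc i p * q)" by (rule homogeneous_mult[OF homogeneous_hc q])
    show "hc e (hc i p * q) = (if i = e - j \<and> j \<le> e then hc i p * q else 0)"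
    proof (cases "e = i + j")
      case True then show ?thesis using h by (simp add: homogeneous_iff_hc)
    next
      case False then show ?thesis using hc_other[OF h False] by auto
    qed
  qed
  also have "\<dots> = (if j \<le> e then hc (e - j) p * q else 0)"
  proof (cases "j \<le> e")
    case True
    have "(\<Sum>i\<in>D. if i = e - j \<and> j \<le> e then hc i p * q else 0) = (\<Sum>i\<in>D. if i = e - j then hc i p * q else 0)"
      using True by simp
    also have "\<dots> = (if e - j \<in> D then hc (e - j) p * q else 0)" using fD by (simp add: sum.delta')
    also have "\<dots> = hc (e - j) p * q" using hc_nz_deg[of "e - j" p] D_def by (cases "hc (e - j) p = 0") auto
    finally show ?thesis using True by simp
  qed simp
  finally show ?thesis .
qed

lemma hc_mult_homog': "homogeneous m f \<Longrightarrow> hc (m + k) (h * f) = hc k h * f"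
  by (simp add: hc_mult_homog)

lemma cscale_cst: "cscale c p = cst c * p"
  by (simp add: cscale_def mult_map_scale_conv_mult)




type_synonym T = "complex poly poly poly"

definition ex :: "('n \<Rightarrow> nat) \<Rightarrow> ('n::finite \<Rightarrow>\<^sub>0 nat) \<Rightarrow> nat \<Rightarrow> nat" where
  "ex e a k = (\<Sum>v\<in>{v. e v = k}. lookup a v)"

definition mono :: "('n \<Rightarrow> nat) \<Rightarrow> ('n::finite \<Rightarrow>\<^sub>0 nat) \<Rightarrow> complex \<Rightarrow> T" where
  "mono e a c = monom (monom (monom c (ex e a 0)) (ex e a 1)) (ex e a 2)"

definition Phi :: "('n \<Rightarrow> nat) \<Rightarrow> ('n::finite) cpoly \<Rightarrow> T" where
  "Phi e p = (\<Sum>a\<in>keys p. mono e a (lookup p a))"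

lemma ex_add: "ex e (a + b) k = ex e a k + ex e b k"
  by (simp add: ex_def lookup_add sum.distrib)

lemma mono_mult: "mono e a c * mono e b d = mono e (a + b) (c * d)"
  by (simp add: mono_def mult_monom ex_add)

lemma mono_zero[simp]: "mono e a 0 = 0"
  by (simp add: mono_def)

lemma mono_add: "mono e a c + mono e a d = mono e a (c + d)"
  by (simp add: mono_def add_monom)

lemma Phi_superset:
  assumes "finite S" "keys p \<subseteq> S"
  shows "Phi e p = (\<Sum>a\<in>S. mono e a (lookup p a))"
  unfolding Phi_def
  by (rule sum.mono_neutral_left[OF assms(1) assms(2)]) (auto simp: in_keys_iff)

lemma Phi_add: "Phi e (p + q) = Phi e p + Phi e q"
proof -
  let ?S = "keys p \<union> keys q"
  have "Phi e (p + q) = (\<Sum>a\<in>?S. mono e a (lookup (p + q) a))"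
    by (rule Phi_superset) (use keys_add[of p q] in auto)
  also have "\<dots> = (\<Sum>a\<in>?S. mono e a (lookup p a)) + (\<Sum>a\<in>?S. mono e a (lookup q a))"
    by (simp add: lookup_add mono_add flip: sum.distrib)
  also have "\<dots> = Phi e p + Phi e q"
    using Phi_superset[of ?S p e] Phi_superset[of ?S q e] by simp
  finally show ?thesis .
qed

lemma Phi_zero[simp]: "Phi e 0 = 0"
  by (simp add: Phi_def)

lemma Phi_single: "Phi e (Poly_Mapping.single a c) = mono e a c"
  by (simp add: Phi_def)

lemma Phi_sum: "Phi e (sum F S) = (\<Sum>i\<in>S. Phi e (F i))"
  by (induction S rule: infinite_finite_induct) (auto simp: Phi_add)

lemma pm_expand: "p = (\<Sum>a\<in>keys p. Poly_Mapping.single a (lookup p a))"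
  by (rule poly_mapping_eqI) (simp add: lookup_sum lookup_single when_def in_keys_iff sum.delta)

lemma Phi_mult: "Phi e (p * q) = Phi e p * Phi e q"
proof -
  have "p * q = (\<Sum>a\<in>keys p. Poly_Mapping.single a (lookup p a)) * (\<Sum>b\<in>keys q. Poly_Mapping.single b (lookup q b))"
    by (subst (1) pm_expand[of p], subst (1) pm_expand[of q]) (rule refl)
  also have "\<dots> = (\<Sum>a\<in>keys p. \<Sum>b\<in>keys q. Poly_Mapping.single (a + b) (lookup p a * lookup q b))"
    by (simp add: sum_product mult_single)
  finally have "Phi e (p * q) = (\<Sum>a\<in>keys p. \<Sum>b\<in>keys q. mono e a (lookup p a) * mono e b (lookup q b))"
    by (simp add: Phi_sum Phi_single mono_mult)
  also have "\<dots> = Phi e p * Phi e q"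
    by (simp add: Phi_def sum_product)
  finally show ?thesis .
qed

lemma Phi_one: "Phi e 1 = 1"
proof -
  have "Phi e 1 = mono e 0 1" by (metis Phi_single single_one)
  also have "\<dots> = 1" by (simp add: mono_def ex_def monom_0 flip: one_pCons)
  finally show ?thesis .
qed

lemma Phi_uminus: "Phi e (- p) = - Phi e p"
  by (metis Phi_add Phi_zero add.right_inverse neg_eq_iff_add_eq_0)

lemma Phi_diff: "Phi e (p - q) = Phi e p - Phi e q"
  using Phi_add[of e p "- q"] Phi_uminus[of e q] by simp

lemma Phi_cst: "Phi e (cst c) = [:[:[:c:]:]:]"
  by (simp add: Phi_single mono_def ex_def monom_0)

context
  fixes e :: "'n::finite \<Rightarrow> nat"
  assumes inj: "inj e" and rng: "\<And>v. e v < 3"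
begin

lemma ex_var: "ex e a (e u) = lookup a u"
proof -
  have "{v. e v = e u} = {u}" using inj by (auto dest: injD)
  then show ?thesis by (simp add: ex_def)
qed

lemma ex_determines:
  assumes "ex e a 0 = ex e b 0" "ex e a 1 = ex e b 1" "ex e a 2 = ex e b 2"
  shows "a = b"
proof (rule poly_mapping_eqI)
  fix u
  have "e u = 0 \<or> e u = 1 \<or> e u = 2" using rng[of u] by auto
  then have "ex e a (e u) = ex e b (e u)" using assms by auto
  then show "lookup a u = lookup b u" by (simp add: ex_var)
qed

definition cf :: "('n \<Rightarrow>\<^sub>0 nat) \<Rightarrow> T \<Rightarrow> complex" where
  "cf a t = coeff (coeff (coeff t (ex e a 2)) (ex e a 1)) (ex e a 0)"

lemma cf_mono: "cf a (mono e b c) = (if a = b then c else 0)"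
  unfolding cf_def mono_def
  using ex_determines[of a b] by (auto simp: coeff_monom)

lemma cf_Phi: "cf a (Phi e p) = lookup p a"
proof -
  have "cf a (Phi e p) = (\<Sum>b\<in>keys p. cf a (mono e b (lookup p b)))"
    unfolding Phi_def cf_def by (simp add: coeff_sum)
  also have "\<dots> = (\<Sum>b\<in>keys p. if a = b then lookup p b else 0)"
    by (simp add: cf_mono)
  also have "\<dots> = lookup p a" by (simp add: sum.delta in_keys_iff)
  finally show ?thesis .
qed

lemma Phi_inj: "Phi e p = Phi e q \<Longrightarrow> p = q"
  by (rule poly_mapping_eqI) (metis cf_Phi)

lemma Phi_eq_0: "Phi e p = 0 \<longleftrightarrow> p = 0"
  using Phi_inj[of p 0] by auto

lemma R_no_zero_div: "(p::'n cpoly) * q = 0 \<longleftrightarrow> p = 0 \<or> q = 0"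
  using Phi_eq_0[of "p * q"] Phi_eq_0[of p] Phi_eq_0[of q] by (auto simp: Phi_mult)

lemma range_sum:
  assumes "finite A" "\<forall>x\<in>A. \<exists>p. Phi e p = F x"
  shows "\<exists>p. Phi e p = sum F A"
  using assms
proof (induction A rule: finite_induct)
  case empty then show ?case by (auto intro: exI[of _ 0])
next
  case (insert x A)
  then obtain p q where "Phi e p = F x" "Phi e q = sum F A" by auto
  then show ?case using insert by (auto intro!: exI[of _ "p + q"] simp: Phi_add)
qed

lemma Phi_surj:
  assumes srj: "\<And>k. k < 3 \<Longrightarrow> \<exists>v. e v = k"
  shows "\<exists>p. Phi e p = t"
proof -
  obtain v0 v1 v2 where v: "e v0 = 0" "e v1 = 1" "e v2 = 2" using srj[of 0] srj[of 1] srj[of 2] by auto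
  have hit: "\<exists>p. Phi e p = monom (monom (monom c i) j) k" for c i j k
  proof -
    define a where "a = Poly_Mapping.single v0 i + Poly_Mapping.single v1 j + Poly_Mapping.single v2 k"
    have d: "v0 \<noteq> v1" "v0 \<noteq> v2" "v1 \<noteq> v2" using v by auto
    have "ex e a 0 = i" "ex e a 1 = j" "ex e a 2 = k"
      using ex_var[of a v0] ex_var[of a v1] ex_var[of a v2] v d
      by (auto simp: a_def lookup_add lookup_single)
    then have "Phi e (Poly_Mapping.single a c) = monom (monom (monom c i) j) k"
      by (simp add: Phi_single mono_def)
    then show ?thesis by blast
  qed
  have h1: "\<exists>p. Phi e p = monom (monom s j) k" for s :: "complex poly" and j k
  proof -
    have "monom (monom s j) k = (\<Sum>i\<le>degree s. monom (monom (monom (coeff s i) i) j) k)"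
      by (subst (1) poly_as_sum_of_monoms[of s, symmetric]) (simp add: monom_sum)
    then show ?thesis using range_sum[of "{..degree s}" "\<lambda>i. monom (monom (monom (coeff s i) i) j) k"] hit
      by auto
  qed
  have h2: "\<exists>p. Phi e p = monom r k" for r :: "complex poly poly" and k
  proof -
    have "monom r k = (\<Sum>j\<le>degree r. monom (monom (coeff r j) j) k)"
      by (subst (1) poly_as_sum_of_monoms[of r, symmetric]) (simp add: monom_sum)
    then show ?thesis using range_sum[of "{..degree r}" "\<lambda>j. monom (monom (coeff r j) j) k"] h1
      by auto
  qed
  have "t = (\<Sum>k\<le>degree t. monom (coeff t k) k)"
    by (simp add: poly_as_sum_of_monoms)
  then show ?thesis using range_sum[of "{..degree t}" "\<lambda>k. monom (coeff t k) k"] h2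
    by auto
qed

end




abbreviation Vc :: "complex \<Rightarrow> 'n \<Rightarrow> 'n cpoly" where
  "Vc c v \<equiv> Poly_Mapping.single (Poly_Mapping.single v (Suc 0)) c"

abbreviation V :: "'n \<Rightarrow> 'n cpoly" where
  "V v \<equiv> Vc 1 v"

lemma cst_V: "cst c * V v = Vc c v"
  by (simp add: mult_single)

lemma single1_eq: "Poly_Mapping.single u (Suc 0) = Poly_Mapping.single u' (Suc 0) \<longleftrightarrow> u = u'"
  by (metis lookup_single_eq lookup_single_not_eq Zero_not_Suc)

declare single1_eq[simp]

lemma pm_add_left_cancel: "(a::'n \<Rightarrow>\<^sub>0 nat) + x = a + m \<Longrightarrow> x = m"
  by (rule poly_mapping_eqI) (metis add_left_cancel lookup_add)

lemma lookup_single_mult_shift: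
  "lookup (Poly_Mapping.single a c * (p::'n cpoly)) (a + m) = c * lookup p m"
proof -
  have "Poly_Mapping.single a c * p = Poly_Mapping.single a c * (\<Sum>b\<in>keys p. Poly_Mapping.single b (lookup p b))"
    by (subst (1) pm_expand[of p]) (rule refl)
  also have "\<dots> = (\<Sum>b\<in>keys p. Poly_Mapping.single (a + b) (c * lookup p b))"
    by (simp add: sum_distrib_left mult_single)
  finally have "lookup (Poly_Mapping.single a c * p) (a + m) = (\<Sum>b\<in>keys p. (c * lookup p b) when a + b = a + m)"
    by (simp add: lookup_sum lookup_single)
  also have "\<dots> = (\<Sum>b\<in>keys p. if b = m then c * lookup p b else 0)"
    by (rule sum.cong) (auto simp: when_def dest: pm_add_left_cancel)
  also have "\<dots> = c * lookup p m" by (simp add: sum.delta' in_keys_iff)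
  finally show ?thesis .
qed

lemma lookup_single_mult_zero:
  assumes "\<And>q. m \<noteq> a + q"
  shows "lookup (Poly_Mapping.single a c * (p::'n cpoly)) m = 0"
proof -
  have "Poly_Mapping.single a c * p = Poly_Mapping.single a c * (\<Sum>b\<in>keys p. Poly_Mapping.single b (lookup p b))"
    by (subst (1) pm_expand[of p]) (rule refl)
  also have "\<dots> = (\<Sum>b\<in>keys p. Poly_Mapping.single (a + b) (c * lookup p b))"
    by (simp add: sum_distrib_left mult_single)
  finally have "lookup (Poly_Mapping.single a c * p) m = (\<Sum>b\<in>keys p. (c * lookup p b) when a + b = m)"
    by (simp add: lookup_sum lookup_single)
  also have "\<dots> = 0" using assms by (intro sum.neutral) (auto simp: when_def)
  finally show ?thesis .
qed

lemma lookup_V_shift: "lookup (V v * p) (Poly_Mapping.single v (Suc 0) + m) = lookup p m"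
  using lookup_single_mult_shift[of "Poly_Mapping.single v (Suc 0)" 1 p m] by simp

lemma lookup_V_zero: "lookup m v = 0 \<Longrightarrow> lookup (V v * p) m = 0"
  by (rule lookup_single_mult_zero) (auto simp: lookup_add)

lemma mon_deg1:
  assumes "mon_deg (a::'n::finite \<Rightarrow>\<^sub>0 nat) = 1"
  shows "\<exists>u. a = Poly_Mapping.single u (Suc 0)"
proof -
  have "a \<noteq> 0" using assms by auto
  then obtain u where u: "lookup a u \<noteq> 0" by (metis poly_mapping_eqI lookup_zero)
  have "1 = (\<Sum>i\<in>UNIV. lookup a i)" using assms by (simp add: mon_deg_sum)
  also have "\<dots> = lookup a u + (\<Sum>i\<in>UNIV - {u}. lookup a i)"
    by (simp add: sum.remove)
  finally have 1: "lookup a u = 1" and 2: "(\<Sum>i\<in>UNIV - {u}. lookup a i) = 0" using u by linarith+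
  have "\<forall>i\<in>UNIV - {u}. lookup a i = 0" using 2 by simp
  then have "a = Poly_Mapping.single u (Suc 0)"
    using 1 by (intro poly_mapping_eqI) (auto simp: lookup_single when_def)
  then show ?thesis by blast
qed

lemma lin_repr:
  assumes "homogeneous 1 (p::'n::finite cpoly)"
  shows "p = (\<Sum>u\<in>UNIV. Vc (lookup p (Poly_Mapping.single u (Suc 0))) u)"
proof (rule poly_mapping_eqI)
  fix a
  have s: "lookup (\<Sum>u\<in>UNIV. Vc (lookup p (Poly_Mapping.single u (Suc 0))) u) a
        = (\<Sum>u\<in>UNIV. if Poly_Mapping.single u (Suc 0) = a then lookup p a else 0)"
    by (auto simp: lookup_sum lookup_single when_def intro!: sum.cong)
  show "lookup p a = lookup (\<Sum>u\<in>UNIV. Vc (lookup p (Poly_Mapping.single u (Suc 0))) u) a"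
  proof (cases "\<exists>u. a = Poly_Mapping.single u (Suc 0)")
    case True
    then obtain u0 where a: "a = Poly_Mapping.single u0 (Suc 0)" by blast
    have "(\<Sum>u\<in>UNIV. if Poly_Mapping.single u (Suc 0) = a then lookup p a else 0)
       = (\<Sum>u\<in>UNIV. if u = u0 then lookup p a else 0)"
      by (rule sum.cong) (auto simp: a single1_eq)
    then show ?thesis using s by simp
  next
    case False
    then have "lookup p a = 0" using assms mon_deg1 by (force simp: homogeneous_def in_keys_iff)
    moreover have "(\<Sum>u\<in>UNIV. if Poly_Mapping.single u (Suc 0) = a then lookup p a else 0) = 0"
      using False by (intro sum.neutral) auto
    ultimately show ?thesis using s by simp
  qed
qed

lemma L1':
  fixes a b :: "'n::finite cpoly"
  assumes vv: "v \<noteq> v'" and ha: "homogeneous 1 a" and hb: "homogeneous 1 b"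
    and eq: "V v' * a = V v * b"
  shows "\<exists>c. a = Vc c v \<and> b = Vc c v'"
proof -
  have za: "lookup a (Poly_Mapping.single u (Suc 0)) = 0" if "u \<noteq> v" for u
  proof -
    have "lookup a (Poly_Mapping.single u (Suc 0)) = lookup (V v' * a) (Poly_Mapping.single v' (Suc 0) + Poly_Mapping.single u (Suc 0))"
      by (rule lookup_V_shift[symmetric])
    also have "\<dots> = lookup (V v * b) (Poly_Mapping.single v' (Suc 0) + Poly_Mapping.single u (Suc 0))" by (simp only: eq)
    also have "\<dots> = 0" using vv that by (intro lookup_V_zero) (auto simp: lookup_add lookup_single)
    finally show ?thesis .
  qed
  have zb: "lookup b (Poly_Mapping.single u (Suc 0)) = 0" if "u \<noteq> v'" for u
  proof -
    have "lookup b (Poly_Mapping.single u (Suc 0)) = lookup (V v * b) (Poly_Mapping.single v (Suc 0) + Poly_Mapping.single u (Suc 0))"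
      by (rule lookup_V_shift[symmetric])
    also have "\<dots> = lookup (V v' * a) (Poly_Mapping.single v (Suc 0) + Poly_Mapping.single u (Suc 0))" by (simp only: eq)
    also have "\<dots> = 0" using vv that by (intro lookup_V_zero) (auto simp: lookup_add lookup_single)
    finally show ?thesis .
  qed
  define c where "c = lookup a (Poly_Mapping.single v (Suc 0))"
  have cb: "lookup b (Poly_Mapping.single v' (Suc 0)) = c"
  proof -
    have "c = lookup (V v' * a) (Poly_Mapping.single v' (Suc 0) + Poly_Mapping.single v (Suc 0))"
      unfolding c_def by (rule lookup_V_shift[symmetric])
    also have "\<dots> = lookup (V v * b) (Poly_Mapping.single v (Suc 0) + Poly_Mapping.single v' (Suc 0))" by (metis eq add.commute)
    also have "\<dots> = lookup b (Poly_Mapping.single v' (Suc 0))" by (rule lookup_V_shift)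
    finally show ?thesis by simp
  qed
  have "a = (\<Sum>u\<in>UNIV. Vc (lookup a (Poly_Mapping.single u (Suc 0))) u)" by (rule lin_repr[OF ha])
  also have "\<dots> = (\<Sum>u\<in>UNIV. if u = v then Vc c v else 0)"
    by (rule sum.cong) (auto simp: za c_def)
  also have "\<dots> = Vc c v" by simp
  finally have A: "a = Vc c v" .
  have "b = (\<Sum>u\<in>UNIV. Vc (lookup b (Poly_Mapping.single u (Suc 0))) u)" by (rule lin_repr[OF hb])
  also have "\<dots> = (\<Sum>u\<in>UNIV. if u = v' then Vc c v' else 0)"
    by (rule sum.cong) (auto simp: zb cb)
  also have "\<dots> = Vc c v'" by simp
  finally have B: "b = Vc c v'" .
  show ?thesis using A B by blast
qed

lemma Vc_lookup[simp]: "lookup (Vc c v) (Poly_Mapping.single u (Suc 0)) = (if u = v then c else 0)"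
  by (auto simp: lookup_single when_def)

lemma L2:
  assumes d: "v0 \<noteq> v1" "v0 \<noteq> v2" "v1 \<noteq> v2"
    and eq: "Vc a v0 + Vc b v1 + Vc c v2 = 0"
  shows "a = 0 \<and> b = 0 \<and> c = 0"
proof -
  have "lookup (Vc a v0 + Vc b v1 + Vc c v2) (Poly_Mapping.single u (Suc 0)) = 0" for u
    using eq by simp
  from this[of v0] this[of v1] this[of v2] d show ?thesis
    by (auto simp: lookup_add Vc_lookup)
qed




lemma R_domain:
  assumes "CARD('n::finite) \<le> 3"
  shows "(p::'n cpoly) * q = 0 \<longleftrightarrow> p = 0 \<or> q = 0"
proof -
  obtain e :: "'n \<Rightarrow> nat" where b: "bij_betw e UNIV {..<CARD('n)}"
    using bij_betw_iff_card[of "UNIV::'n set" "{..<CARD('n)}"] by auto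
  have i: "inj e" using b by (simp add: bij_betw_def)
  have r: "e v < 3" for v using b assms unfolding bij_betw_def by (metis lessThan_iff rangeI order_less_le_trans)
  show ?thesis by (rule R_no_zero_div[OF i r])
qed

lemma hc_ne0: "a \<in> keys p \<Longrightarrow> hc (mon_deg a) p \<noteq> 0"
  by (metis lookup_hc in_keys_iff lookup_zero)

lemma DL:
  fixes f q :: "'n::finite cpoly"
  assumes card: "CARD('n) \<le> 3" and hf: "homogeneous m f" and f0: "f \<noteq> 0"
    and hq: "homogeneous d (q * f)"
  shows "homogeneous (d - m) q \<and> (q \<noteq> 0 \<longrightarrow> m \<le> d)"
proof -
  have key: "m + mon_deg a = d" if a: "a \<in> keys q" for a
  proof (rule ccontr)
    assume ne: "m + mon_deg a \<noteq> d"
    have "hc (m + mon_deg a) (q * f) = hc (mon_deg a) q * f" by (rule hc_mult_homog'[OF hf])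
    moreover have "hc (mon_deg a) q * f \<noteq> 0" using hc_ne0[OF a] f0 R_domain[OF card] by auto
    moreover have "hc (m + mon_deg a) (q * f) = 0" by (rule hc_other[OF hq ne])
    ultimately show False by simp
  qed
  have "homogeneous (d - m) q" unfolding homogeneous_def using key by force
  moreover have "q \<noteq> 0 \<longrightarrow> m \<le> d"
  proof
    assume "q \<noteq> 0"
    then obtain a where "a \<in> keys q" by (metis keys_eq_empty ex_in_conv)
    then show "m \<le> d" using key by force
  qed
  ultimately show ?thesis by blast
qed

lemma hc_mult_gen:
  fixes p q :: "'n::finite cpoly"
  shows "hc e (p * q) = (\<Sum>i\<in>mon_deg ` keys q. if i \<le> e then hc (e - i) p * hc i q else 0)"
proof -
  have fD: "finite (mon_deg ` keys q)" by simp
  have eq: "q = (\<Sum>i\<in>mon_deg ` keys q. hc i q)" by (rule hc_decomp[OF fD]) simp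
  have "p * q = (\<Sum>i\<in>mon_deg ` keys q. p * hc i q)"
    by (subst (1) eq) (simp add: sum_distrib_left)
  then have "hc e (p * q) = (\<Sum>i\<in>mon_deg ` keys q. hc e (p * hc i q))"
    by (simp add: hc_sum)
  also have "\<dots> = (\<Sum>i\<in>mon_deg ` keys q. if i \<le> e then hc (e - i) p * hc i q else 0)"
    by (rule sum.cong[OF refl]) (rule hc_mult_homog[OF homogeneous_hc])
  finally show ?thesis .
qed

lemma hc_not_deg: "i \<notin> mon_deg ` keys p \<Longrightarrow> hc i p = 0"
  using hc_nz_deg by blast

lemma H:
  fixes p q :: "'n::finite cpoly"
  assumes card: "CARD('n) \<le> 3" and hd: "homogeneous d (p * q)" and nz: "p * q \<noteq> 0"
  shows "\<exists>k\<le>d. homogeneous k p \<and> homogeneous (d - k) q"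
proof -
  have p0: "p \<noteq> 0" and q0: "q \<noteq> 0" using nz by auto
  define Dp where "Dp = mon_deg ` keys p"
  define Dq where "Dq = mon_deg ` keys q"
  have fin: "finite Dp" "finite Dq" by (simp_all add: Dp_def Dq_def)
  have ne: "Dp \<noteq> {}" "Dq \<noteq> {}" using p0 q0 by (auto simp: Dp_def Dq_def)
  define K where "K = Max Dp"
  define k where "k = Min Dp"
  define J where "J = Max Dq"
  define j where "j = Min Dq"
  have KD: "K \<in> Dp" "k \<in> Dp" "J \<in> Dq" "j \<in> Dq"
    using fin ne by (simp_all add: K_def k_def J_def j_def)
  have bnd: "\<And>i. i \<in> Dp \<Longrightarrow> k \<le> i \<and> i \<le> K" "\<And>i. i \<in> Dq \<Longrightarrow> j \<le> i \<and> i \<le> J"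
    using fin by (auto simp: K_def k_def J_def j_def)
  have nzh: "hc i p \<noteq> 0" if "i \<in> Dp" for i using that hc_ne0 by (auto simp: Dp_def)
  have nzh': "hc i q \<noteq> 0" if "i \<in> Dq" for i using that hc_ne0 by (auto simp: Dq_def)
  have zp: "hc i p = 0" if "i \<notin> Dp" for i using that hc_not_deg by (auto simp: Dp_def)
  have top: "hc (K + J) (p * q) = hc K p * hc J q"
  proof -
    have "hc (K + J) (p * q) = (\<Sum>i\<in>Dq. if i \<le> K + J then hc (K + J - i) p * hc i q else 0)"
      unfolding Dq_def by (rule hc_mult_gen)
    also have "\<dots> = (\<Sum>i\<in>Dq. if i = J then hc K p * hc J q else 0)"
    proof (rule sum.cong[OF refl])
      fix i assume i: "i \<in> Dq"
      show "(if i \<le> K + J then hc (K + J - i) p * hc i q else 0) = (if i = J then hc K p * hc J q else 0)"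
      proof (cases "i = J")
        case False
        then have "i < J" using bnd(2)[OF i] by auto
        then have "K + J - i \<notin> Dp" using bnd(1) by fastforce
        then show ?thesis using False by (simp add: zp)
      qed simp
    qed
    also have "\<dots> = hc K p * hc J q" using fin KD by (simp add: sum.delta')
    finally show ?thesis .
  qed
  have bot: "hc (k + j) (p * q) = hc k p * hc j q"
  proof -
    have "hc (k + j) (p * q) = (\<Sum>i\<in>Dq. if i \<le> k + j then hc (k + j - i) p * hc i q else 0)"
      unfolding Dq_def by (rule hc_mult_gen)
    also have "\<dots> = (\<Sum>i\<in>Dq. if i = j then hc k p * hc j q else 0)"
    proof (rule sum.cong[OF refl])
      fix i assume i: "i \<in> Dq"
      show "(if i \<le> k + j then hc (k + j - i) p * hc i q else 0) = (if i = j then hc k p * hc j q else 0)"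
      proof (cases "i = j")
        case False
        then have "j < i" using bnd(2)[OF i] by auto
        then have "i \<le> k + j \<Longrightarrow> k + j - i \<notin> Dp" using bnd(1) by fastforce
        then show ?thesis using False by (auto simp: zp)
      qed simp
    qed
    also have "\<dots> = hc k p * hc j q" using fin KD by (simp add: sum.delta')
    finally show ?thesis .
  qed
  have "hc (K + J) (p * q) \<noteq> 0" using top nzh[OF KD(1)] nzh'[OF KD(3)] R_domain[OF card] by auto
  then have KJ: "K + J = d" using hc_other[OF hd] by blast
  have "hc (k + j) (p * q) \<noteq> 0" using bot nzh[OF KD(2)] nzh'[OF KD(4)] R_domain[OF card] by auto
  then have kj: "k + j = d" using hc_other[OF hd] by blast
  have "k \<le> K" "j \<le> J" using bnd KD by auto
  then have eqs: "k = K" "j = J" using KJ kj by auto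
  have "homogeneous K p" unfolding homogeneous_def
    using bnd(1) eqs by (force simp: Dp_def)
  moreover have "homogeneous (d - K) q" unfolding homogeneous_def
    using bnd(2) eqs KJ by (force simp: Dq_def)
  ultimately show ?thesis using KJ by (intro exI[of _ K]) auto
qed

context
  fixes v0 v1 v2 :: "'n::finite"
  assumes dist: "v0 \<noteq> v1" "v0 \<noteq> v2" "v1 \<noteq> v2"
    and univ: "UNIV = {v0, v1, v2}"
begin

lemma lin_repr3:
  assumes "homogeneous 1 (p::'n cpoly)"
  shows "p = Vc (lookup p (Poly_Mapping.single v0 (Suc 0))) v0 + Vc (lookup p (Poly_Mapping.single v1 (Suc 0))) v1
           + Vc (lookup p (Poly_Mapping.single v2 (Suc 0))) v2"
  using lin_repr[OF assms] dist by (simp add: univ add.assoc)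

lemma coef_shift2: "lookup (V v * p) (Poly_Mapping.single u (Suc 0) + Poly_Mapping.single v (Suc 0)) = lookup p (Poly_Mapping.single u (Suc 0))"
  by (metis add.commute lookup_V_shift)

lemma coef_zero: "v \<noteq> u \<Longrightarrow> v \<noteq> u' \<Longrightarrow> lookup (V v * p) (Poly_Mapping.single u (Suc 0) + Poly_Mapping.single u' (Suc 0)) = 0"
  by (rule lookup_V_zero) (simp add: lookup_add lookup_single)

lemma L3:
  fixes c0 c1 c2 :: "'n cpoly"
  assumes h: "homogeneous 1 c0" "homogeneous 1 c1" "homogeneous 1 c2"
    and E: "V v0 * c0 + V v1 * c1 + V v2 * c2 = 0"
  shows "\<exists>u0 u1 u2. c0 = Vc u1 v2 - Vc u2 v1 \<and> c1 = Vc u2 v0 - Vc u0 v2 \<and> c2 = Vc u0 v1 - Vc u1 v0"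
proof -
  let ?m = "\<lambda>u. Poly_Mapping.single u (Suc 0)"
  have L: "lookup (V v0 * c0 + V v1 * c1 + V v2 * c2) (?m a + ?m b) = 0" for a b
    using E by simp
  note ds = dist dist[symmetric]
  have e00: "lookup c0 (?m v0) = 0" using L[of v0 v0] ds by (simp add: lookup_add lookup_V_shift coef_zero)
  have e11: "lookup c1 (?m v1) = 0" using L[of v1 v1] ds by (simp add: lookup_add lookup_V_shift coef_zero)
  have e22: "lookup c2 (?m v2) = 0" using L[of v2 v2] ds by (simp add: lookup_add lookup_V_shift coef_zero)
  have e01: "lookup c0 (?m v1) + lookup c1 (?m v0) = 0" using L[of v0 v1] ds
    by (simp add: lookup_add lookup_V_shift coef_shift2 coef_zero)
  have e02: "lookup c0 (?m v2) + lookup c2 (?m v0) = 0" using L[of v0 v2] ds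
    by (simp add: lookup_add lookup_V_shift coef_shift2 coef_zero)
  have e12: "lookup c1 (?m v2) + lookup c2 (?m v1) = 0" using L[of v1 v2] ds
    by (simp add: lookup_add lookup_V_shift coef_shift2 coef_zero)
  define u0 where "u0 = lookup c2 (?m v1)"
  define u1 where "u1 = lookup c0 (?m v2)"
  define u2 where "u2 = lookup c1 (?m v0)"
  have "c0 = Vc u1 v2 - Vc u2 v1"
  proof -
    have "lookup c0 (?m v1) = - u2" using e01 u2_def by (simp add: eq_neg_iff_add_eq_0)
    then show ?thesis using lin_repr3[OF h(1)] e00 u1_def by (simp add: single_uminus)
  qed
  moreover have "c1 = Vc u2 v0 - Vc u0 v2"
  proof -
    have "lookup c1 (?m v2) = - u0" using e12 u0_def by (simp add: eq_neg_iff_add_eq_0)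
    then show ?thesis using lin_repr3[OF h(2)] e11 u2_def by (simp add: single_uminus)
  qed
  moreover have "c2 = Vc u0 v1 - Vc u1 v0"
  proof -
    have "lookup c2 (?m v0) = - u1" using e02 u1_def by (simp add: eq_neg_iff_add_eq_0 add.commute)
    then show ?thesis using lin_repr3[OF h(3)] e22 u0_def by (simp add: single_uminus)
  qed
  ultimately show ?thesis by blast
qed

end




lemma Vc_eq_iff: "Vc c v = Vc d v \<longleftrightarrow> c = d"
  by (metis lookup_single_eq)

lemma V_ne0: "V v \<noteq> 0"
  by (metis lookup_single_eq lookup_zero one_neq_zero)

lemma hom0: "homogeneous 0 (p::'n::finite cpoly) \<Longrightarrow> p = cst (lookup p 0)"
  unfolding homogeneous_def
  by (rule poly_mapping_eqI) (auto simp: lookup_single when_def in_keys_iff mon_deg_eq_0)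

lemma ringA: "(x::'a::comm_ring_1) * a - y * b = - f * (w * y - u * x) \<Longrightarrow> x * (a - u * f) = y * (b - w * f)"
  by (simp add: algebra_simps)
lemma ringB: "(x::'a::comm_ring_1) * a - y * b = f * (w * y - u * x) \<Longrightarrow> x * (a + u * f) = y * (b + w * f)"
  by (simp add: algebra_simps)
lemma ringC: "(x::'a::comm_ring_1) * g = a0 * f1 + b0 * f2 \<Longrightarrow> a0 - u * f2 = c * x \<Longrightarrow> b0 + u * f1 = d * x
   \<Longrightarrow> x * (g - (c * f1 + d * f2)) = 0"
proof -
  assume h: "x * g = a0 * f1 + b0 * f2" "a0 - u * f2 = c * x" "b0 + u * f1 = d * x"
  have a: "a0 = c * x + u * f2" using h(2) by (simp add: diff_eq_eq)
  have b: "b0 = d * x - u * f1" using h(3) by (simp add: eq_diff_eq)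
  have "x * g = (c * x + u * f2) * f1 + (d * x - u * f1) * f2" using h(1) a b by simp
  then show ?thesis by (simp add: algebra_simps)
qed
lemma ringD: "(g::'a::comm_ring_1) - (c * f1 + d * f2) = 0 \<Longrightarrow> 1 * g + (- c) * f1 + (- d) * f2 = 0"
  by (simp add: algebra_simps)

context
  fixes v0 v1 v2 :: "'n::finite"
  assumes dist: "v0 \<noteq> v1" "v0 \<noteq> v2" "v1 \<noteq> v2"
    and univ: "UNIV = {v0, v1, v2}"
begin

lemma card3: "CARD('n) \<le> 3"
  by (simp add: univ card_insert_if)

lemma ENDGAME:
  fixes g f1 f2 a0 a2 b0 b2 :: "'n cpoly"
  assumes eq0: "V v0 * g = a0 * f1 + b0 * f2"
    and indep: "\<And>l m n. cst l * g + cst m * f1 + cst n * f2 = 0 \<Longrightarrow> l = 0 \<and> m = 0 \<and> n = 0"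
    and hg: "homogeneous 1 (a0 - cst u0 * f2)" "homogeneous 1 (a2 - cst u2 * f2)"
    and hh: "homogeneous 1 (b0 + cst u0 * f1)" "homogeneous 1 (b2 + cst u2 * f1)"
    and X1: "V v2 * a0 - V v0 * a2 = - f2 * (cst u2 * V v0 - cst u0 * V v2)"
    and Y1: "V v2 * b0 - V v0 * b2 = f1 * (cst u2 * V v0 - cst u0 * V v2)"
  shows False
proof -
  have g2: "V v2 * (a0 - cst u0 * f2) = V v0 * (a2 - cst u2 * f2)" by (rule ringA[OF X1])
  have h2: "V v2 * (b0 + cst u0 * f1) = V v0 * (b2 + cst u2 * f1)" by (rule ringB[OF Y1])
  obtain c where c: "a0 - cst u0 * f2 = Vc c v0"
    using L1'[OF dist(2) hg(1) hg(2) g2] by blast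
  obtain d where d: "b0 + cst u0 * f1 = Vc d v0"
    using L1'[OF dist(2) hh(1) hh(2) h2] by blast
  have A: "a0 - cst u0 * f2 = cst c * V v0" unfolding c by (rule cst_V[symmetric])
  have B: "b0 + cst u0 * f1 = cst d * V v0" unfolding d by (rule cst_V[symmetric])
  have "V v0 * (g - (cst c * f1 + cst d * f2)) = 0"
    by (rule ringC[OF eq0 A B])
  then have "g - (cst c * f1 + cst d * f2) = 0"
    by (simp add: R_domain[OF card3] V_ne0)
  then have "cst 1 * g + cst (- c) * f1 + cst (- d) * f2 = 0"
    unfolding single_uminus single_one by (rule ringD)
  from indep[OF this] show False by simp
qed

end


lemma dvd_mult_gcd: "(c::'a::semiring_gcd) dvd x * a \<Longrightarrow> c dvd x * b \<Longrightarrow> c dvd x * gcd a b"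
proof -
  assume "c dvd x * a" "c dvd x * b"
  then have "c dvd gcd (x * a) (x * b)" by simp
  then show ?thesis by (simp add: gcd_mult_left)
qed

lemma dvd_gcd_unit: "is_unit (gcd a b) \<Longrightarrow> (c::'a::semiring_gcd) dvd x * a \<Longrightarrow> c dvd x * b \<Longrightarrow> c dvd x"
  using dvd_mult_gcd dvd_mult_unit_iff by blast

lemma ringX: "(p::'a::comm_ring_1) * g = al * f1 + be * f2 \<Longrightarrow> q * g = ga * f1 + de * f2
  \<Longrightarrow> (p * ga - q * al) * g = f2 * (ga * be - al * de)"
proof -
  assume h: "p * g = al * f1 + be * f2" "q * g = ga * f1 + de * f2"
  have "(p * ga - q * al) * g = ga * (p * g) - al * (q * g)" by (simp add: algebra_simps)
  also have "\<dots> = ga * (al * f1 + be * f2) - al * (ga * f1 + de * f2)" by (simp only: h)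
  also have "\<dots> = f2 * (ga * be - al * de)" by (simp add: algebra_simps)
  finally show ?thesis .
qed

lemma ringY: "(p::'a::comm_ring_1) * g = al * f1 + be * f2 \<Longrightarrow> q * g = ga * f1 + de * f2
  \<Longrightarrow> (p * ga - q * al) * f1 = - (f2 * (p * de - q * be))"
proof -
  assume h: "p * g = al * f1 + be * f2" "q * g = ga * f1 + de * f2"
  have "(p * ga - q * al) * f1 + f2 * (p * de - q * be) = p * (ga * f1 + de * f2) - q * (al * f1 + be * f2)"
    by (simp add: algebra_simps)
  also have "\<dots> = p * (q * g) - q * (p * g)" by (simp only: h)
  also have "\<dots> = 0" by (simp add: algebra_simps)
  finally show ?thesis by (simp add: eq_neg_iff_add_eq_0)
qed

lemma ringS: "(x::'a::comm_ring_1) * (y * a2 - z * a1) + y * (z * a0 - x * a2) + z * (x * a1 - y * a0) = 0"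
  by (simp add: algebra_simps)

lemma ringS2: "(x::'a::comm_ring_1) * (f * s0) + y * (f * s1) + z * (f * s2) = f * (x * s0 + y * s1 + z * s2)"
  by (simp add: algebra_simps)

lemma ringT: "(f2::'a::comm_ring_1) * s * f1 = - (f2 * Y) \<Longrightarrow> f2 * (s * f1 + Y) = 0"
  by (simp add: algebra_simps)

lemma hom_V: "homogeneous 1 (V v :: 'n::finite cpoly)"
  by (simp add: homogeneous_def)

lemma hom_X:
  assumes "homogeneous 1 (a::'n::finite cpoly)" "homogeneous 1 b"
  shows "homogeneous 2 (V u * a - V v * b)"
  using homogeneous_diff[OF homogeneous_mult[OF hom_V assms(1)] homogeneous_mult[OF hom_V assms(2)]]
  by (simp add: numeral_2_eq_2)

context
  fixes e :: "'n::finite \<Rightarrow> nat"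
  assumes inj: "inj e" and rng: "\<And>v. e v < 3" and srj: "\<And>k. k < 3 \<Longrightarrow> \<exists>v. e v = k"
begin

lemma Phi_dvd: "(p::'n cpoly) dvd q \<Longrightarrow> Phi e p dvd Phi e q"
  by (metis Phi_mult dvdE dvdI)

lemma Phi_dvd_rev: "Phi e p dvd Phi e q \<Longrightarrow> (p::'n cpoly) dvd q"
proof -
  assume "Phi e p dvd Phi e q"
  then obtain t where t: "Phi e q = Phi e p * t" by (rule dvdE)
  obtain s where s: "Phi e s = t" using Phi_surj[OF inj rng srj] by blast
  have "Phi e q = Phi e (p * s)" by (simp add: t s Phi_mult)
  then have "q = p * s" by (rule Phi_inj[OF inj rng])
  then show ?thesis by simp
qed

end


lemma ringN:
  assumes "(x::'a::comm_ring_1) * s0 + y * s1 + z * s2 = 0"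
  shows "x * (- s0) + y * (- s1) + z * (- s2) = 0"
proof -
  have "x * (- s0) + y * (- s1) + z * (- s2) = - (x * s0 + y * s1 + z * s2)" by (simp add: algebra_simps)
  with assms show ?thesis by simp
qed

lemma ringU: "(X::'a::comm_ring_1) = f * s \<Longrightarrow> - s = c \<Longrightarrow> X = - f * c"
proof -
  assume a: "X = f * s" "- s = c"
  then have "c = - s" by simp
  then show ?thesis using a(1) by simp
qed
lemma ringV: "(Y::'a::comm_ring_1) = - (f * s) \<Longrightarrow> - s = c \<Longrightarrow> Y = f * c"
proof -
  assume a: "Y = - (f * s)" "- s = c"
  then have "c = - s" by simp
  then show ?thesis using a(1) by simp
qed

lemma ringR: "(x::'a::comm_ring_1) * (D * g) = a * (D * f) + b * (D * h) \<Longrightarrow> D * (x * g - (a * f + b * h)) = 0"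
  by (simp add: algebra_simps)
lemma ringI: "(l::'a::comm_ring_1) * (D * g) + m * (D * f) + n * (D * h) = D * (l * g + m * f + n * h)"
  by (simp add: algebra_simps)

lemma cst_mult_cst: "cst a * cst b = cst (a * b)"
  by (simp add: mult_single)

context
  fixes v0 v1 v2 :: "'n::finite" and e :: "'n \<Rightarrow> nat"
  assumes dist: "v0 \<noteq> v1" "v0 \<noteq> v2" "v1 \<noteq> v2"
    and univ: "UNIV = {v0, v1, v2}"
    and inj: "inj e" and rng: "\<And>v. e v < 3" and srj: "\<And>k. k < 3 \<Longrightarrow> \<exists>v. e v = k"
begin

lemma MAIN:
  fixes g f1 f2 a0 a1 a2 b0 b1 b2 :: "'n cpoly"
  assumes hg: "homogeneous m g" and hf1: "homogeneous m f1" and hf2: "homogeneous m f2"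
    and ha: "homogeneous 1 a0" "homogeneous 1 a1" "homogeneous 1 a2"
    and hb: "homogeneous 1 b0" "homogeneous 1 b1" "homogeneous 1 b2"
    and eq0: "V v0 * g = a0 * f1 + b0 * f2"
    and eq1: "V v1 * g = a1 * f1 + b1 * f2"
    and eq2: "V v2 * g = a2 * f1 + b2 * f2"
    and indep: "\<And>l m n. cst l * g + cst m * f1 + cst n * f2 = 0 \<Longrightarrow> l = 0 \<and> m = 0 \<and> n = 0"
    and prim: "is_unit (gcd (Phi e g) (gcd (Phi e f1) (Phi e f2)))"
  shows False
proof -
  note dom = R_domain[OF card3[OF dist univ]]
  have g0: "g \<noteq> 0"
  proof
    assume "g = 0"
    then have "cst 1 * g + cst 0 * f1 + cst 0 * f2 = 0" by simp
    from indep[OF this] show False by simp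
  qed
  have f10: "f1 \<noteq> 0"
  proof
    assume "f1 = 0"
    then have "cst 0 * g + cst 1 * f1 + cst 0 * f2 = 0" by simp
    from indep[OF this] show False by simp
  qed
  have f20: "f2 \<noteq> 0"
  proof
    assume "f2 = 0"
    then have "cst 0 * g + cst 0 * f1 + cst 1 * f2 = 0" by simp
    from indep[OF this] show False by simp
  qed
  define X0 where "X0 = V v1 * a2 - V v2 * a1"
  define X1 where "X1 = V v2 * a0 - V v0 * a2"
  define X2 where "X2 = V v0 * a1 - V v1 * a0"
  define Y0 where "Y0 = V v1 * b2 - V v2 * b1"
  define Y1 where "Y1 = V v2 * b0 - V v0 * b2"
  define Y2 where "Y2 = V v0 * b1 - V v1 * b0"
  have xg0: "X0 * g = f2 * (a2 * b1 - a1 * b2)" unfolding X0_def by (rule ringX[OF eq1 eq2])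
  have xg1: "X1 * g = f2 * (a0 * b2 - a2 * b0)" unfolding X1_def by (rule ringX[OF eq2 eq0])
  have xg2: "X2 * g = f2 * (a1 * b0 - a0 * b1)" unfolding X2_def by (rule ringX[OF eq0 eq1])
  have xf0: "X0 * f1 = - (f2 * Y0)" unfolding X0_def Y0_def by (rule ringY[OF eq1 eq2])
  have xf1: "X1 * f1 = - (f2 * Y1)" unfolding X1_def Y1_def by (rule ringY[OF eq2 eq0])
  have xf2: "X2 * f1 = - (f2 * Y2)" unfolding X2_def Y2_def by (rule ringY[OF eq0 eq1])
  have sumX: "V v0 * X0 + V v1 * X1 + V v2 * X2 = 0" unfolding X0_def X1_def X2_def by (rule ringS)
  have divs: "\<exists>s. X = f2 * s \<and> Y = - (f1 * s)" if xg: "X * g = f2 * W" and xf: "X * f1 = - (f2 * Y)" for X Y W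
  proof -
    have "Phi e f2 dvd Phi e X * Phi e g"
      by (metis Phi_mult dvd_triv_left xg)
    moreover have "Phi e f2 dvd Phi e X * gcd (Phi e f1) (Phi e f2)"
    proof (rule dvd_mult_gcd)
      show "Phi e f2 dvd Phi e X * Phi e f1"
        by (metis Phi_mult Phi_uminus dvd_minus_iff dvd_triv_left xf)
      show "Phi e f2 dvd Phi e X * Phi e f2" by simp
    qed
    ultimately have "Phi e f2 dvd Phi e X" by (rule dvd_gcd_unit[OF prim])
    then have "f2 dvd X" using Phi_dvd_rev[of e f2 X] inj rng srj by blast
    then obtain s where s: "X = f2 * s" by (rule dvdE)
    then have "f2 * s * f1 = - (f2 * Y)" using xf by simp
    then have "f2 * (s * f1 + Y) = 0" by (rule ringT)
    then have "s * f1 + Y = 0" using f20 dom by simp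
    then have "Y = - (f1 * s)" by (simp add: eq_neg_iff_add_eq_0 algebra_simps)
    then show ?thesis using s by blast
  qed
  obtain s0 where s0: "X0 = f2 * s0" "Y0 = - (f1 * s0)" using divs[OF xg0 xf0] by blast
  obtain s1 where s1: "X1 = f2 * s1" "Y1 = - (f1 * s1)" using divs[OF xg1 xf1] by blast
  obtain s2 where s2: "X2 = f2 * s2" "Y2 = - (f1 * s2)" using divs[OF xg2 xf2] by blast
  have "f2 * (V v0 * s0 + V v1 * s1 + V v2 * s2) = 0"
    using sumX unfolding s0 s1 s2 ringS2 .
  then have sums: "V v0 * s0 + V v1 * s1 + V v2 * s2 = 0" using f20 dom by simp
  have hX: "homogeneous 2 X0" "homogeneous 2 X1" "homogeneous 2 X2"
    unfolding X0_def X1_def X2_def using ha by (auto intro: hom_X)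
  have DLs: "homogeneous (2 - m) s \<and> (s \<noteq> 0 \<longrightarrow> m \<le> 2)" if "homogeneous 2 (f2 * s)" for s
    using DL[OF card3[OF dist univ] hf2 f20, of 2 s] that by (simp add: mult.commute)
  have ds0: "homogeneous (2 - m) s0 \<and> (s0 \<noteq> 0 \<longrightarrow> m \<le> 2)" using DLs hX(1) s0(1) by simp
  have ds1: "homogeneous (2 - m) s1 \<and> (s1 \<noteq> 0 \<longrightarrow> m \<le> 2)" using DLs hX(2) s1(1) by simp
  have ds2: "homogeneous (2 - m) s2 \<and> (s2 \<noteq> 0 \<longrightarrow> m \<le> 2)" using DLs hX(3) s2(1) by simp
  show False
  proof (cases "m = 0")
    case True
    have G: "g = cst (lookup g 0)" using hom0 hg True by simp
    have F: "f1 = cst (lookup f1 0)" using hom0 hf1 True by simp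
    have "cst (lookup f1 0) * g + cst (- lookup g 0) * f1 + cst 0 * f2 = 0"
    proof -
      have "cst (lookup f1 0) * g + cst (- lookup g 0) * f1
          = cst (lookup f1 0) * cst (lookup g 0) + cst (- lookup g 0) * cst (lookup f1 0)"
        using G F by simp
      also have "\<dots> = 0" by (simp add: cst_mult_cst single_uminus mult.commute)
      finally show ?thesis by simp
    qed
    from indep[OF this] have "lookup f1 0 = 0" by simp
    then show False using F f10 by simp
  next
    case m0: False
    show False
    proof (cases "m = 1")
      case True
      have h1: "homogeneous 1 (- s0)" "homogeneous 1 (- s1)" "homogeneous 1 (- s2)"
        using ds0 ds1 ds2 True by (auto intro: homogeneous_uminus)
      have "V v0 * (- s0) + V v1 * (- s1) + V v2 * (- s2) = 0"
        using ringN[OF sums] .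
      then obtain u0 u1 u2 where u: "- s0 = Vc u1 v2 - Vc u2 v1" "- s1 = Vc u2 v0 - Vc u0 v2" "- s2 = Vc u0 v1 - Vc u1 v0"
        using L3[OF dist univ h1] by blast
      have u2: "- s1 = cst u2 * V v0 - cst u0 * V v2" using u(2) by (simp only: cst_V)
      have X1': "V v2 * a0 - V v0 * a2 = - f2 * (cst u2 * V v0 - cst u0 * V v2)"
        using ringU[OF s1(1) u2] unfolding X1_def .
      have Y1': "V v2 * b0 - V v0 * b2 = f1 * (cst u2 * V v0 - cst u0 * V v2)"
        using ringV[OF s1(2) u2] unfolding Y1_def .
      have hcf: "homogeneous 1 (cst u * f)" if "homogeneous 1 f" for u and f :: "'n cpoly"
        using homogeneous_mult[OF homogeneous_cst that] by simp
      have hf1': "homogeneous 1 f1" and hf2': "homogeneous 1 f2" using hf1 hf2 True by simp_all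
      show False
        by (rule ENDGAME[OF dist univ eq0 indep
              homogeneous_diff[OF ha(1) hcf[OF hf2']] homogeneous_diff[OF ha(3) hcf[OF hf2']]
              homogeneous_add[OF hb(1) hcf[OF hf1']] homogeneous_add[OF hb(3) hcf[OF hf1']] X1' Y1'])
    next
      case False
      have "m \<ge> 2" using m0 False by simp
      have z: "s0 = 0 \<and> s1 = 0 \<and> s2 = 0"
      proof (cases "m = 2")
        case True
        have "s0 = cst (lookup s0 0)" "s1 = cst (lookup s1 0)" "s2 = cst (lookup s2 0)"
          using ds0 ds1 ds2 True hom0 by auto
        then have "Vc (lookup s0 0) v0 + Vc (lookup s1 0) v1 + Vc (lookup s2 0) v2 = 0"
          using sums by (metis cst_V mult.commute)
        then have "lookup s0 0 = 0 \<and> lookup s1 0 = 0 \<and> lookup s2 0 = 0" by (rule L2[OF dist])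
        then show ?thesis using \<open>s0 = _\<close> \<open>s1 = _\<close> \<open>s2 = _\<close> by simp
      next
        case False
        then show ?thesis using ds0 ds1 ds2 \<open>m \<ge> 2\<close> by auto
      qed
      have X1': "V v2 * a0 - V v0 * a2 = - f2 * (cst 0 * V v0 - cst 0 * V v2)"
        using s1(1) z unfolding X1_def by simp
      have Y1': "V v2 * b0 - V v0 * b2 = f1 * (cst 0 * V v0 - cst 0 * V v2)"
        using s1(2) z unfolding Y1_def by simp
      show False
        by (rule ENDGAME[OF dist univ eq0 indep _ _ _ _ X1' Y1']) (use ha hb in simp_all)
    qed
  qed
qed


lemma REDUCE:
  fixes g f1 f2 a0 a1 a2 b0 b1 b2 :: "'n cpoly"
  assumes hg: "homogeneous m g" and hf1: "homogeneous m f1" and hf2: "homogeneous m f2"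
    and ha: "homogeneous 1 a0" "homogeneous 1 a1" "homogeneous 1 a2"
    and hb: "homogeneous 1 b0" "homogeneous 1 b1" "homogeneous 1 b2"
    and eq0: "V v0 * g = a0 * f1 + b0 * f2"
    and eq1: "V v1 * g = a1 * f1 + b1 * f2"
    and eq2: "V v2 * g = a2 * f1 + b2 * f2"
    and indep: "\<And>l m n. cst l * g + cst m * f1 + cst n * f2 = 0 \<Longrightarrow> l = 0 \<and> m = 0 \<and> n = 0"
  shows False
proof -
  note card = card3[OF dist univ]
  note dom = R_domain[OF card]
  have g0: "g \<noteq> 0"
  proof
    assume "g = 0"
    then have "cst 1 * g + cst 0 * f1 + cst 0 * f2 = 0" by simp
    from indep[OF this] show False by simp
  qed
  define G where "G = gcd (Phi e g) (gcd (Phi e f1) (Phi e f2))"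
  obtain D where D: "Phi e D = G" using Phi_surj[OF inj rng srj] by blast
  have "D dvd g" using Phi_dvd_rev[of e D g] inj rng srj D unfolding G_def by simp
  then obtain g' where g': "g = D * g'" by (rule dvdE)
  have "D dvd f1" using Phi_dvd_rev[of e D f1] inj rng srj D unfolding G_def
    by (metis dvd_trans gcd_dvd1 gcd_dvd2)
  then obtain f1' where f1': "f1 = D * f1'" by (rule dvdE)
  have "D dvd f2" using Phi_dvd_rev[of e D f2] inj rng srj D unfolding G_def
    by (metis dvd_trans gcd_dvd2)
  then obtain f2' where f2': "f2 = D * f2'" by (rule dvdE)
  have D0: "D \<noteq> 0" using g0 g' by auto
  obtain k where k: "k \<le> m" "homogeneous k D" "homogeneous (m - k) g'"
    using H[OF card, of m D g'] hg g0 g' by auto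
  have hf1': "homogeneous (m - k) f1'"
    using DL[OF card k(2) D0, of m f1'] hf1 f1' by (simp add: mult.commute)
  have hf2': "homogeneous (m - k) f2'"
    using DL[OF card k(2) D0, of m f2'] hf2 f2' by (simp add: mult.commute)
  have canc: "x * g' = a * f1' + b * f2'" if "x * g = a * f1 + b * f2" for x a b
  proof -
    have "D * (x * g' - (a * f1' + b * f2')) = 0"
      using that unfolding g' f1' f2' by (rule ringR)
    then show ?thesis using D0 dom by simp
  qed
  have indep': "l = 0 \<and> mm = 0 \<and> n = 0" if "cst l * g' + cst mm * f1' + cst n * f2' = 0" for l mm n
  proof -
    have "cst l * g + cst mm * f1 + cst n * f2 = D * (cst l * g' + cst mm * f1' + cst n * f2')"
      unfolding g' f1' f2' by (rule ringI)
    then show ?thesis using that indep by simp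
  qed
  have prim: "is_unit (gcd (Phi e g') (gcd (Phi e f1') (Phi e f2')))"
  proof -
    define G' where "G' = gcd (Phi e g') (gcd (Phi e f1') (Phi e f2'))"
    have PG: "Phi e g = G * Phi e g'" "Phi e f1 = G * Phi e f1'" "Phi e f2 = G * Phi e f2'"
      using g' f1' f2' D by (simp_all add: Phi_mult)
    have "G * G' dvd Phi e g" unfolding PG G'_def by (rule mult_dvd_mono) simp_all
    moreover have "G * G' dvd Phi e f1" unfolding PG G'_def
      by (rule mult_dvd_mono) (simp, metis dvd_trans gcd_dvd1 gcd_dvd2)
    moreover have "G * G' dvd Phi e f2" unfolding PG G'_def
      by (rule mult_dvd_mono) (simp, metis dvd_trans gcd_dvd2)
    ultimately have "G * G' dvd G * 1" unfolding G_def by simp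
    moreover have "G \<noteq> 0" using D D0 Phi_eq_0[OF inj rng] by metis
    ultimately have "G' dvd 1" by simp
    then show ?thesis by (simp add: G'_def)
  qed
  show False
    by (rule MAIN[OF k(3) hf1' hf2' ha hb canc[OF eq0] canc[OF eq1] canc[OF eq2] indep' prim])
qed

end




lemma ringP: "(x::'a::comm_ring_1) * g = a * f \<Longrightarrow> y * g = b * f \<Longrightarrow> (y * a - x * b) * f = 0"
proof -
  assume h: "x * g = a * f" "y * g = b * f"
  have "(y * a - x * b) * f = y * (a * f) - x * (b * f)" by (simp add: algebra_simps)
  also have "\<dots> = y * (x * g) - x * (y * g)" by (simp only: h)
  also have "\<dots> = 0" by (simp add: algebra_simps)
  finally show ?thesis .
qed

lemma ringQ: "(x::'a::comm_ring_1) * g = (c * x) * f \<Longrightarrow> x * (g - c * f) = 0"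
  by (simp add: algebra_simps)

lemma two_vars: "CARD('n::finite) \<ge> 2 \<Longrightarrow> \<exists>v v'::'n. v \<noteq> v'"
proof (rule ccontr)
  assume c: "CARD('n) \<ge> 2" "\<not> (\<exists>v v'::'n. v \<noteq> v')"
  then have "CARD('n) \<le> Suc 0" using card_le_Suc0_iff_eq[of "UNIV::'n set"] by simp
  then show False using c by simp
qed

theorem proposition2:
  fixes f :: "nat \<Rightarrow> ('n::finite) cpoly" and g :: "'n cpoly" and P m :: nat
  assumes "CARD('n) \<le> 3"
    and "\<forall>i<P. homogeneous m (f i)"
    and "homogeneous m g"
    and "lin_indep_fam P f g"
    and "hom_comp (gen_ideal 1 (\<lambda>_. g)) (m + 1) \<subseteq> hom_comp (gen_ideal P f) (m + 1)"
  shows "P \<ge> CARD('n)"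
proof (rule ccontr)
  assume "\<not> P \<ge> CARD('n)"
  then have PC: "P < CARD('n)" by simp
  note card = assms(1)
  note dom = R_domain[OF card]
  note hf = assms(2) and hg = assms(3)
  have indep: "\<And>c d. (\<Sum>i<P. cst (c i) * f i) + cst d * g = 0 \<Longrightarrow> (\<forall>i<P. c i = 0) \<and> d = 0"
    using assms(4) unfolding lin_indep_fam_def cscale_cst by blast
  have gnz: "g \<noteq> 0"
  proof
    assume "g = 0"
    then have "(\<Sum>i<P. cst 0 * f i) + cst 1 * g = 0" by simp
    from indep[OF this] show False by simp
  qed
  have extr: "\<exists>l. (\<forall>i. homogeneous 1 (l i)) \<and> V v * g = (\<Sum>i<P. l i * f i)" for v
  proof -
    have hv: "homogeneous (m + 1) (V v * g)"
      using homogeneous_mult[OF hom_V hg] by (simp add: add.commute)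
    have "V v * g \<in> hom_comp (gen_ideal 1 (\<lambda>_. g)) (m + 1)"
      unfolding hom_comp_def gen_ideal_def using hv by (auto intro: exI[of _ "\<lambda>_. V v"])
    then have "V v * g \<in> hom_comp (gen_ideal P f) (m + 1)" using assms(5) by blast
    then obtain h where h: "V v * g = (\<Sum>i<P. h i * f i)"
      unfolding hom_comp_def gen_ideal_def by blast
    have "V v * g = hc (m + 1) (V v * g)" using hv by (simp add: homogeneous_iff_hc)
    also have "\<dots> = (\<Sum>i<P. hc (m + 1) (h i * f i))" by (simp add: h hc_sum)
    also have "\<dots> = (\<Sum>i<P. hc 1 (h i) * f i)"
    proof (rule sum.cong[OF refl])
      fix i assume "i \<in> {..<P}"
      then have "homogeneous m (f i)" using hf by simp
      then show "hc (m + 1) (h i * f i) = hc 1 (h i) * f i" by (rule hc_mult_homog')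
    qed
    finally have "V v * g = (\<Sum>i<P. hc 1 (h i) * f i)" .
    moreover have "\<forall>i. homogeneous 1 (hc 1 (h i))" by (intro allI homogeneous_hc)
    ultimately show ?thesis by (intro exI[of _ "\<lambda>i. hc 1 (h i)"] conjI)
  qed
  have "P = 0 \<or> P = 1 \<or> P = 2" using PC card by linarith
  then show False
  proof (elim disjE)
    assume P0: "P = 0"
    obtain v :: 'n where "v = v" by blast
    obtain l where "V v * g = (\<Sum>i<P. l i * f i)" using extr by blast
    then have vg: "V v * g = 0" using P0 by simp
    have "V v \<noteq> 0" by (rule V_ne0)
    then have "g = 0" using vg dom by auto
    then show False using gnz by blast
  next
    assume P1: "P = 1"
    have "\<exists>v v'::'n. v \<noteq> v'" by (rule two_vars) (use PC P1 in simp)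
    then obtain v v' :: 'n where vv: "v \<noteq> v'" by blast
    obtain l where la: "\<forall>i. homogeneous 1 (l i)" and lb: "V v * g = (\<Sum>i<P. l i * f i)" using extr[of v] by blast
    obtain l' where la': "\<forall>i. homogeneous 1 (l' i)" and lb': "V v' * g = (\<Sum>i<P. l' i * f i)" using extr[of v'] by blast
    have l: "\<forall>i. homogeneous 1 (l i)" "V v * g = l 0 * f 0" using la lb P1 by simp_all
    have l': "\<forall>i. homogeneous 1 (l' i)" "V v' * g = l' 0 * f 0" using la' lb' P1 by simp_all
    have f0: "f 0 \<noteq> 0"
    proof
      assume "f 0 = 0"
      then have "(\<Sum>i<P. cst 1 * f i) + cst 0 * g = 0" using P1 by simp
      from indep[OF this] have "\<forall>i<P. (1::complex) = 0" by blast
      moreover have "0 < P" using P1 by simp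
      ultimately show False by simp
    qed
    have "(V v' * l 0 - V v * l' 0) * f 0 = 0" by (rule ringP[OF l(2) l'(2)])
    then have "V v' * l 0 = V v * l' 0" using f0 dom by simp
    then obtain c where c: "l 0 = Vc c v" using L1'[OF vv] l(1) l'(1) by blast
    have "V v * g = (cst c * V v) * f 0" using l(2) c by (simp add: cst_V)
    then have "V v * (g - cst c * f 0) = 0" by (rule ringQ)
    moreover have "V v \<noteq> 0" by (rule V_ne0)
    ultimately have "g - cst c * f 0 = 0" using dom by auto
    then have "g = cst c * f 0" by simp
    then have "(\<Sum>i<P. cst (- c) * f i) + cst 1 * g = 0" using P1 by (simp add: single_uminus)
    from indep[OF this] show False by simp
  next
    assume P2: "P = 2"
    then have "CARD('n) = 3" using PC card by simp
    then obtain v0 v1 v2 :: 'n where u: "UNIV = {v0, v1, v2}" and d: "v0 \<noteq> v1" "v1 \<noteq> v2" "v0 \<noteq> v2"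
      using card_3_iff[of "UNIV :: 'n set"] by auto
    define e where "e v = (if v = v0 then 0 else if v = v1 then 1 else (2::nat))" for v
    have inj: "inj e" unfolding inj_def e_def using d u by auto
    have rng: "e v < 3" for v by (simp add: e_def)
    have srj: "\<exists>v. e v = k" if "k < 3" for k
    proof -
      have "k = 0 \<or> k = 1 \<or> k = 2" using that by auto
      then show ?thesis using d unfolding e_def by (metis)
    qed
    have sum2: "(\<Sum>i<P. F i) = F 0 + F 1" for F :: "nat \<Rightarrow> 'n cpoly"
      using P2 by (simp add: numeral_2_eq_2)
    obtain l0 where l0a: "\<forall>i. homogeneous 1 (l0 i)" and l0b: "V v0 * g = (\<Sum>i<P. l0 i * f i)"
      using extr[of v0] by blast
    have l0: "\<forall>i. homogeneous 1 (l0 i)" "V v0 * g = l0 0 * f 0 + l0 1 * f 1"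
      using l0a l0b sum2[of "\<lambda>i. l0 i * f i"] by simp_all
    obtain l1 where l1a: "\<forall>i. homogeneous 1 (l1 i)" and l1b: "V v1 * g = (\<Sum>i<P. l1 i * f i)"
      using extr[of v1] by blast
    have l1: "\<forall>i. homogeneous 1 (l1 i)" "V v1 * g = l1 0 * f 0 + l1 1 * f 1"
      using l1a l1b sum2[of "\<lambda>i. l1 i * f i"] by simp_all
    obtain l2 where l2a: "\<forall>i. homogeneous 1 (l2 i)" and l2b: "V v2 * g = (\<Sum>i<P. l2 i * f i)"
      using extr[of v2] by blast
    have l2: "\<forall>i. homogeneous 1 (l2 i)" "V v2 * g = l2 0 * f 0 + l2 1 * f 1"
      using l2a l2b sum2[of "\<lambda>i. l2 i * f i"] by simp_all
    have indep3: "a = 0 \<and> b = 0 \<and> c = 0" if "cst a * g + cst b * f 0 + cst c * f 1 = 0" for a b c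
    proof -
      define cc where "cc i = (if i = 0 then b else c)" for i :: nat
      have "(\<Sum>i<P. cst (cc i) * f i) + cst a * g = 0"
        using that sum2 by (simp add: cc_def algebra_simps)
      from indep[OF this] have "cc 0 = 0" "cc 1 = 0" "a = 0" using P2 by auto
      then show ?thesis by (simp add: cc_def)
    qed
    have hf0: "homogeneous m (f 0)" and hf1: "homogeneous m (f 1)" using hf P2 by auto
    show False
      by (rule REDUCE[OF d(1) d(3) d(2) u inj rng srj hg hf0 hf1
            l0(1)[rule_format, of 0] l1(1)[rule_format, of 0] l2(1)[rule_format, of 0]
            l0(1)[rule_format, of 1] l1(1)[rule_format, of 1] l2(1)[rule_format, of 1]
            l0(2) l1(2) l2(2) indep3])
  qed
qed


end
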